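(* Let $A_1,\dots,A_p\in M_m$, let $\langle\mathcal{S}\rangle_0$ (resp. $\langle\mathcal{S}\rangle_1$) be the unital (resp. not necessarily unital) subalgebra of $M_m$ generated by $A_1,\dots,A_p$, and let $\tau(X)=\sum_{i=1}^pA_i^*XA_i$ on $M_m$. Let $(a_n)_{n\ge0}$ be strictly positive scalars such that $\sum_{n\ge0}a_n\tau^n$ converges in norm. Then for $j=0,1$ there exists a natural number $N_j\le m^2$ such that the coefficient space of $\sum_{n=j}^{N_j}a_n\tau^n$ equals $\langle\mathcal{S}\rangle_j$, and the Choi rank of $\sum_{n=j}^{N_j}a_n\tau^n$ equals $\dim\langle\mathcal{S}\rangle_j$.
   Context: $\tau^0$ is the identity map. For a completely positive map $\sigma$ on $M_m$ with Choi-Kraus decomposition $\sigma(X)=\sum_kC_k^*XC_k$, the coefficient space of $\sigma$ is $\mathrm{span}\{C_k\}$ (independent of the decomposition) and its dimension is the Choi rank of $\sigma$. *)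

theory Defs
  imports "HOL-Analysis.Analysis"
begin

type_synonym 'm cmat = "complex^'m^'m"

definition cscale :: "complex \<Rightarrow> 'm::finite cmat \<Rightarrow> 'm cmat" where
  "cscale c A = (\<chi> i j. c * A $ i $ j)"

definition cadj :: "'m::finite cmat \<Rightarrow> 'm cmat" where
  "cadj A = (\<chi> i j. cnj (A $ j $ i))"

definition is_subalg :: "'m::finite cmat set \<Rightarrow> bool" where
  "is_subalg B \<longleftrightarrow> module.subspace cscale B \<and> (\<forall>x\<in>B. \<forall>y\<in>B. x ** y \<in> B)"

definition gen_alg :: "bool \<Rightarrow> 'm::finite cmat set \<Rightarrow> 'm cmat set" where
  "gen_alg unital S = \<Inter>{B. is_subalg B \<and> S \<subseteq> B \<and> (unital \<longrightarrow> mat 1 \<in> B)}"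

definition is_kraus :: "('m::finite cmat \<Rightarrow> 'm cmat) \<Rightarrow> 'm cmat list \<Rightarrow> bool" where
  "is_kraus \<sigma> Cs \<longleftrightarrow> (\<forall>X. \<sigma> X = (\<Sum>C\<leftarrow>Cs. cadj C ** X ** C))"

text \<open>Coefficient space: the span of the Kraus operators of a Choi-Kraus decomposition
  (independent of the decomposition).\<close>
definition coeff_space :: "('m::finite cmat \<Rightarrow> 'm cmat) \<Rightarrow> 'm cmat set" where
  "coeff_space \<sigma> = (THE V. \<exists>Cs. is_kraus \<sigma> Cs \<and> V = module.span cscale (set Cs))"

definition choi_rank :: "('m::finite cmat \<Rightarrow> 'm cmat) \<Rightarrow> nat" where
  "choi_rank \<sigma> = vector_space.dim cscale (coeff_space \<sigma>)"

end

theory Submission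
  imports Defs
begin

lemma cscale_comp[simp]: "cscale c X $ i $ j = c * X $ i $ j"
  by (simp add: cscale_def)

interpretation cv: vector_space cscale
  by unfold_locales (auto simp: vec_eq_iff cscale_def algebra_simps)

interpretation cf: vector_space "(*) :: complex \<Rightarrow> complex \<Rightarrow> complex"
  by unfold_locales (auto simp: algebra_simps)

interpretation cp: vector_space_pair cscale "(*) :: complex \<Rightarrow> complex \<Rightarrow> complex"
  by unfold_locales

lemma sum_list_comp: "(\<Sum>x\<leftarrow>xs. f x) $ i = (\<Sum>x\<leftarrow>xs. f x $ i)"
  by (induction xs) auto

definition EE :: "'m::finite \<Rightarrow> 'm \<Rightarrow> 'm cmat" where
  "EE a b = (\<chi> i j. if i = a \<and> j = b then 1 else 0)"

lemma EE_comp: "EE a b $ i $ j = (if i = a \<and> j = b then 1 else 0)"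
  by (simp add: EE_def)

lemma mult_ind[simp]: "x * (if P then 1 else 0) = (if P then x else (0::complex))"
  by simp

lemma ind_mult: "(if P then x else 0) * y = (if P then x * y else (0::complex))"
  by simp

lemma sum2_delta: fixes i :: "'a::finite" and j :: "'b::finite" shows "(\<Sum>a\<in>UNIV. \<Sum>b\<in>UNIV. if i = a \<and> j = b then f a b else 0) = f i j"
proof -
  have "(\<Sum>b\<in>UNIV. if i = a \<and> j = b then f a b else 0) = (if i = a then f a j else 0)" for a
    by (cases "i = a") (simp_all add: sum.delta sum.delta')
  then show ?thesis by (simp add: sum.delta)
qed

lemma expand_mat: "X = (\<Sum>a\<in>UNIV. \<Sum>b\<in>UNIV. cscale (X$a$b) (EE a b))"
proof -
  have "(\<Sum>a\<in>UNIV. \<Sum>b\<in>UNIV. cscale (X$a$b) (EE a b)) $ i $ j = X $ i $ j" for i j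
  proof -
    have "(\<Sum>a\<in>UNIV. \<Sum>b\<in>UNIV. cscale (X$a$b) (EE a b)) $ i $ j
        = (\<Sum>a\<in>UNIV. \<Sum>b\<in>UNIV. if i = a \<and> j = b then X$a$b else 0)"
      by (simp add: EE_comp)
    also have "\<dots> = X $ i $ j" by (rule sum2_delta)
    finally show ?thesis .
  qed
  then show ?thesis by (simp add: vec_eq_iff)
qed

lemma lin_expand:
  assumes "Vector_Spaces.linear cscale ((*) :: complex \<Rightarrow> complex \<Rightarrow> complex) g"
  shows "g X = (\<Sum>a\<in>UNIV. \<Sum>b\<in>UNIV. X$a$b * g (EE a b))"
proof -
  interpret Vector_Spaces.linear cscale "(*) :: complex \<Rightarrow> complex \<Rightarrow> complex" g by fact
  have "g X = g (\<Sum>a\<in>UNIV. \<Sum>b\<in>UNIV. cscale (X$a$b) (EE a b))"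
    by (rule arg_cong[where f=g, OF expand_mat])
  also have "\<dots> = (\<Sum>a\<in>UNIV. \<Sum>b\<in>UNIV. X$a$b * g (EE a b))"
    by (simp add: sum scale)
  finally show ?thesis .
qed

lemma kraus_entry: "(cadj C ** EE a b ** C) $ i $ j = cnj (C$a$i) * C$b$j"
proof -
  have "(cadj C ** EE a b ** C) $ i $ j = (\<Sum>k\<in>UNIV. (\<Sum>l\<in>UNIV. (if l = a \<and> k = b then cnj (C $ l $ i) else 0)) * C $ k $ j)"
    by (simp add: matrix_matrix_mult_def cadj_def EE_comp)
  also have "\<dots> = (\<Sum>k\<in>UNIV. \<Sum>l\<in>UNIV. if l = a \<and> k = b then cnj (C $ l $ i) * C $ k $ j else 0)"
    by (simp add: sum_distrib_right ind_mult)
  also have "\<dots> = (\<Sum>l\<in>UNIV. \<Sum>k\<in>UNIV. if a = l \<and> b = k then cnj (C $ l $ i) * C $ k $ j else 0)"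
    by (subst sum.swap) (simp add: eq_commute conj_commute)
  also have "\<dots> = cnj (C$a$i) * C$b$j" by (rule sum2_delta)
  finally show ?thesis .
qed

definition QQ :: "('m::finite cmat \<Rightarrow> 'm cmat) \<Rightarrow> ('m cmat \<Rightarrow> complex) \<Rightarrow> complex" where
  "QQ \<sigma> g = (\<Sum>a\<in>UNIV. \<Sum>i\<in>UNIV. \<Sum>b\<in>UNIV. \<Sum>j\<in>UNIV.
      cnj (g (EE a i)) * g (EE b j) * (\<sigma> (EE a b)) $ i $ j)"

lemma cnj_sq_of_real: "cnj z * z = complex_of_real ((cmod z)\<^sup>2)"
  by (metis complex_mult_cnj mult.commute cmod_power2 of_real_add of_real_power)

lemma sum_cnj_sq_zero: "(\<Sum>x\<leftarrow>xs. cnj (f x) * f x) = 0 \<longleftrightarrow> (\<forall>x\<in>set xs. f x = (0::complex))"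
proof -
  have "(\<Sum>x\<leftarrow>xs. cnj (f x) * f x) = complex_of_real (\<Sum>x\<leftarrow>xs. (cmod (f x))\<^sup>2)"
    by (induction xs) (simp_all add: cnj_sq_of_real)
  moreover have "(\<Sum>x\<leftarrow>xs. (cmod (f x))\<^sup>2) = 0 \<longleftrightarrow> (\<forall>x\<in>set xs. f x = 0)"
    by (subst sum_list_nonneg_eq_0_iff) auto
  ultimately show ?thesis by simp
qed

lemma prod4: "(\<Sum>a\<in>A. \<Sum>i\<in>I. f a i) * (\<Sum>b\<in>B. \<Sum>j\<in>J. h b j) = (\<Sum>a\<in>A. \<Sum>i\<in>I. \<Sum>b\<in>B. \<Sum>j\<in>J. f a i * (h b j :: complex))"
  apply (subst sum_distrib_right, rule sum.cong[OF refl])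
  apply (subst sum_distrib_right, rule sum.cong[OF refl])
  apply (simp add: sum_distrib_left)
  done

lemma QQ_kraus:
  assumes "is_kraus \<sigma> Cs" "Vector_Spaces.linear cscale ((*) :: complex \<Rightarrow> complex \<Rightarrow> complex) g"
  shows "QQ \<sigma> g = (\<Sum>C\<leftarrow>Cs. cnj (g C) * g C)"
proof -
  define n where "n = length Cs"
  have s: "\<sigma> (EE a b) $ i $ j = (\<Sum>k<n. cnj (Cs!k$a$i) * (Cs!k)$b$j)" for a b i j
    using assms(1) unfolding is_kraus_def n_def
    by (simp add: kraus_entry sum_list_comp sum_list_sum_nth atLeast0LessThan)
  have "QQ \<sigma> g = (\<Sum>a\<in>UNIV. \<Sum>i\<in>UNIV. \<Sum>b\<in>UNIV. \<Sum>j\<in>UNIV. \<Sum>k<n.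
      cnj (g (EE a i)) * g (EE b j) * (cnj (Cs!k$a$i) * (Cs!k)$b$j))"
    unfolding QQ_def s by (simp add: sum_distrib_left)
  also have "\<dots> = (\<Sum>k<n. \<Sum>a\<in>UNIV. \<Sum>i\<in>UNIV. \<Sum>b\<in>UNIV. \<Sum>j\<in>UNIV.
      cnj (g (EE a i)) * g (EE b j) * (cnj (Cs!k$a$i) * (Cs!k)$b$j))"
    by (simp only: sum.swap[where B="{..<n}"])
  also have "\<dots> = (\<Sum>k<n. cnj (g (Cs!k)) * g (Cs!k))"
  proof (rule sum.cong[OF refl])
    fix k
    show "(\<Sum>a\<in>UNIV. \<Sum>i\<in>UNIV. \<Sum>b\<in>UNIV. \<Sum>j\<in>UNIV.
      cnj (g (EE a i)) * g (EE b j) * (cnj (Cs!k$a$i) * (Cs!k)$b$j)) = cnj (g (Cs!k)) * g (Cs!k)"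
    proof -
      have gC: "g (Cs!k) = (\<Sum>b\<in>UNIV. \<Sum>j\<in>UNIV. (Cs!k)$b$j * g (EE b j))"
        by (rule lin_expand[OF assms(2)])
      have "cnj (g (Cs!k)) * g (Cs!k) = cnj (\<Sum>a\<in>UNIV. \<Sum>i\<in>UNIV. (Cs!k)$a$i * g (EE a i)) * (\<Sum>b\<in>UNIV. \<Sum>j\<in>UNIV. (Cs!k)$b$j * g (EE b j))"
        by (simp only: gC)
      also have "\<dots> = (\<Sum>a\<in>UNIV. \<Sum>i\<in>UNIV. cnj ((Cs!k)$a$i * g (EE a i))) * (\<Sum>b\<in>UNIV. \<Sum>j\<in>UNIV. (Cs!k)$b$j * g (EE b j))"
        by (simp only: cnj_sum)
      also have "\<dots> = (\<Sum>a\<in>UNIV. \<Sum>i\<in>UNIV. \<Sum>b\<in>UNIV. \<Sum>j\<in>UNIV. cnj ((Cs!k)$a$i * g (EE a i)) * ((Cs!k)$b$j * g (EE b j)))"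
        by (rule prod4)
      finally show ?thesis by (simp add: ac_simps)
    qed
  qed
  also have "\<dots> = (\<Sum>C\<leftarrow>Cs. cnj (g C) * g C)"
    by (simp add: sum_list_sum_nth n_def atLeast0LessThan)
  finally show ?thesis .
qed

lemma span_char:
  assumes "is_kraus \<sigma> Cs"
  shows "cv.span (set Cs) = {x. \<forall>g. Vector_Spaces.linear cscale ((*) :: complex \<Rightarrow> complex \<Rightarrow> complex) g
      \<and> QQ \<sigma> g = 0 \<longrightarrow> g x = 0}"
proof (intro set_eqI iffI CollectI allI impI)
  fix x g
  assume x: "x \<in> cv.span (set Cs)" and g: "Vector_Spaces.linear cscale ((*) :: complex \<Rightarrow> complex \<Rightarrow> complex) g
      \<and> QQ \<sigma> g = 0"
  then have lin: "Vector_Spaces.linear cscale ((*) :: complex \<Rightarrow> complex \<Rightarrow> complex) g" by blast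
  interpret Vector_Spaces.linear cscale "(*) :: complex \<Rightarrow> complex \<Rightarrow> complex" g by fact
  have "\<forall>C\<in>set Cs. g C = 0" using g QQ_kraus[OF assms lin] sum_cnj_sq_zero by metis
  then have "set Cs \<subseteq> {x. g x = 0}" by auto
  then have "cv.span (set Cs) \<subseteq> {x. g x = 0}"
    by (rule cv.span_minimal) (rule subspace_kernel)
  then show "g x = 0" using x by auto
next
  fix x
  assume H: "x \<in> {x. \<forall>g. Vector_Spaces.linear cscale ((*) :: complex \<Rightarrow> complex \<Rightarrow> complex) g
      \<and> QQ \<sigma> g = 0 \<longrightarrow> g x = 0}"
  show "x \<in> cv.span (set Cs)"
  proof (rule ccontr)
    assume nx: "x \<notin> cv.span (set Cs)"
    obtain B where B: "B \<subseteq> set Cs" "cv.independent B" "set Cs \<subseteq> cv.span B"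
      using cv.maximal_independent_subset by blast
    have spB: "cv.span B = cv.span (set Cs)"
      using B by (metis cv.span_mono cv.span_span cv.span_subspace cv.subspace_span) 
    have "x \<notin> cv.span B" using nx spB by simp
    then have ind: "cv.independent (insert x B)" using B(2) cv.independent_insertI by blast
    obtain g where lin: "Vector_Spaces.linear cscale ((*) :: complex \<Rightarrow> complex \<Rightarrow> complex) g"
      and gv: "\<forall>y\<in>insert x B. g y = (\<lambda>y. if y = x then 1 else 0) y"
      using cp.linear_independent_extend[OF ind, of "\<lambda>y. if y = x then 1 else 0"] by blast
    interpret Vector_Spaces.linear cscale "(*) :: complex \<Rightarrow> complex \<Rightarrow> complex" g by fact
    have gx: "g x = 1" using gv by simp
    have "B \<subseteq> {y. g y = 0}" using gv \<open>x \<notin> cv.span B\<close> cv.span_superset by fastforce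
    then have "cv.span B \<subseteq> {y. g y = 0}"
      by (rule cv.span_minimal) (rule subspace_kernel)
    then have "\<forall>C\<in>set Cs. g C = 0" using B(3) by auto
    then have "QQ \<sigma> g = 0" using QQ_kraus[OF assms lin] sum_cnj_sq_zero by metis
    then have "g x = 0" using H lin by blast
    then show False using gx by simp
  qed
qed

lemma coeff_space_eq:
  assumes "is_kraus \<sigma> Cs"
  shows "coeff_space \<sigma> = cv.span (set Cs)"
  unfolding coeff_space_def
proof (rule the_equality)
  show "\<exists>Cs'. is_kraus \<sigma> Cs' \<and> cv.span (set Cs) = cv.span (set Cs')" using assms by blast
next
  fix V assume "\<exists>Cs'. is_kraus \<sigma> Cs' \<and> V = cv.span (set Cs')"
  then obtain Cs' where "is_kraus \<sigma> Cs'" "V = cv.span (set Cs')" by blast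
  then show "V = cv.span (set Cs)" using span_char[OF assms] span_char by simp
qed

lemma mm_rdistrib: fixes A :: "'a::semiring_1^'n^'k" shows "(A + B) ** C = A ** C + B ** C"
  by (vector matrix_matrix_mult_def sum.distrib[symmetric] field_simps)

lemma sl_mult_right: fixes f :: "'b \<Rightarrow> 'm::finite cmat" shows "(\<Sum>x\<leftarrow>xs. f x) ** (Y::'m::finite cmat) = (\<Sum>x\<leftarrow>xs. f x ** Y)"
  by (induction xs) (simp_all add: mm_rdistrib)

lemma sl_mult_left: fixes f :: "'b \<Rightarrow> 'm::finite cmat" shows "(Y::'m::finite cmat) ** (\<Sum>x\<leftarrow>xs. f x) = (\<Sum>x\<leftarrow>xs. Y ** f x)"
  by (induction xs) (simp_all add: matrix_add_ldistrib)

lemma sum_list_concat_map: "(\<Sum>x\<leftarrow>concat (map g ys). f x) = (\<Sum>y\<leftarrow>ys. \<Sum>x\<leftarrow>g y. f x)"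
  by (induction ys) simp_all

lemma cadj_mult: "cadj ((B::'m::finite cmat) ** C) = cadj C ** cadj B"
  by (simp add: vec_eq_iff cadj_def matrix_matrix_mult_def mult.commute)

lemma cadj_scaleR: "cadj (r *\<^sub>R (B::'m::finite cmat)) = r *\<^sub>R cadj B"
  by (simp add: vec_eq_iff cadj_def)

lemma scaleR_cscale: "r *\<^sub>R (B::'m::finite cmat) = cscale (of_real r) B"
  by (simp add: vec_eq_iff cscale_def scaleR_conv_of_real[where 'a=complex])

lemma cadj_one[simp]: "cadj (mat 1 :: 'm::finite cmat) = mat 1"
  by (simp add: vec_eq_iff cadj_def mat_def)

lemma sl_upt: "(\<Sum>n\<leftarrow>[j..<Suc N]. f n) = (\<Sum>n=j..N. f n)"
  by (metis atLeastLessThanSuc_atLeastAtMost set_upt sum_set_upt_conv_sum_list_nat)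


lemma scaleR_sum_list: "r *\<^sub>R (\<Sum>x\<leftarrow>xs. f x) = (\<Sum>x\<leftarrow>xs. r *\<^sub>R (f x :: 'm::finite cmat))"
  by (induction xs) (simp_all add: scaleR_right_distrib)

fun words :: "(nat \<Rightarrow> 'm::finite cmat) \<Rightarrow> nat \<Rightarrow> nat \<Rightarrow> 'm cmat list" where
  "words A p 0 = [mat 1]"
| "words A p (Suc n) = concat (map (\<lambda>i. map (\<lambda>B. B ** A i) (words A p n)) [1..<Suc p])"

lemma words_Suc_mem: "C \<in> set (words A p (Suc n)) \<longleftrightarrow> (\<exists>i\<in>{1..p}. \<exists>B\<in>set (words A p n). C = B ** A i)"
  by auto

lemma tau_pow_kraus:
  assumes tau_def: "\<And>X. \<tau> X = (\<Sum>i=1..p. cadj (A i) ** X ** A i)"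
  shows "(\<tau> ^^ n) X = (\<Sum>B\<leftarrow>words A p n. cadj B ** X ** B)"
proof (induction n)
  case 0
  then show ?case by simp
next
  case (Suc n)
  have "(\<tau> ^^ Suc n) X = \<tau> ((\<tau> ^^ n) X)" by simp
  also have "\<dots> = \<tau> (\<Sum>B\<leftarrow>words A p n. cadj B ** X ** B)" using Suc by simp
  also have "\<dots> = (\<Sum>i=1..p. cadj (A i) ** (\<Sum>B\<leftarrow>words A p n. cadj B ** X ** B) ** A i)"
    by (rule tau_def)
  also have "\<dots> = (\<Sum>i\<leftarrow>[1..<Suc p]. \<Sum>B\<leftarrow>words A p n. cadj (B ** A i) ** X ** (B ** A i))"
    by (simp add: sl_upt[symmetric] sl_mult_right sl_mult_left cadj_mult matrix_mul_assoc)
  also have "\<dots> = (\<Sum>B\<leftarrow>words A p (Suc n). cadj B ** X ** B)"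
    by (simp add: sum_list_concat_map o_def)
  finally show ?case .
qed

definition KS :: "(nat \<Rightarrow> 'm::finite cmat) \<Rightarrow> nat \<Rightarrow> (nat \<Rightarrow> real) \<Rightarrow> nat \<Rightarrow> nat \<Rightarrow> 'm cmat list" where
  "KS A p a j N = concat (map (\<lambda>n. map (\<lambda>B. sqrt (a n) *\<^sub>R B) (words A p n)) [j..<Suc N])"

lemma KS_kraus:
  assumes tau_def: "\<And>X. \<tau> X = (\<Sum>i=1..p. cadj (A i) ** X ** A i)"
    and a_pos: "\<And>n. a n > 0"
  shows "is_kraus (\<lambda>X. \<Sum>n=j..N. a n *\<^sub>R (\<tau> ^^ n) X) (KS A p a j N)"
  unfolding is_kraus_def
proof
  fix X
  have "(\<Sum>n=j..N. a n *\<^sub>R (\<tau> ^^ n) X) = (\<Sum>n\<leftarrow>[j..<Suc N]. a n *\<^sub>R (\<Sum>B\<leftarrow>words A p n. cadj B ** X ** B))"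
    by (simp only: tau_pow_kraus[OF tau_def] sl_upt)
  also have "\<dots> = (\<Sum>n\<leftarrow>[j..<Suc N]. \<Sum>B\<leftarrow>words A p n. cadj (sqrt (a n) *\<^sub>R B) ** X ** (sqrt (a n) *\<^sub>R B))"
  proof -
    have "a n *\<^sub>R (cadj B ** X ** B) = cadj (sqrt (a n) *\<^sub>R B) ** X ** (sqrt (a n) *\<^sub>R B)" for n B
    proof -
      have "sqrt (a n) * sqrt (a n) = a n" using a_pos[of n] by simp
      then show ?thesis
        by (simp add: cadj_scaleR matrix_scalar_ac scalar_matrix_assoc[symmetric])
    qed
    then show ?thesis by (simp add: scaleR_sum_list)
  qed
  also have "\<dots> = (\<Sum>C\<leftarrow>KS A p a j N. cadj C ** X ** C)"
    by (simp add: KS_def sum_list_concat_map o_def)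
  finally show "(\<Sum>n=j..N. a n *\<^sub>R (\<tau> ^^ n) X) = (\<Sum>C\<leftarrow>KS A p a j N. cadj C ** X ** C)" .
qed

lemma KS_span:
  assumes a_pos: "\<And>n. a n > 0"
  shows "cv.span (set (KS A p a j N)) = cv.span (\<Union>n\<in>{j..N}. set (words A p n))"
proof -
  have s1: "set (KS A p a j N) \<subseteq> cv.span (\<Union>n\<in>{j..N}. set (words A p n))"
  proof
    fix C assume "C \<in> set (KS A p a j N)"
    then obtain n B where nB0: "n \<in> {j..<Suc N}" "B \<in> set (words A p n)" "C = sqrt (a n) *\<^sub>R B"
      unfolding KS_def by (auto simp del: upt_Suc)
    then have nB: "n \<in> {j..N}" "B \<in> set (words A p n)" "C = sqrt (a n) *\<^sub>R B" by auto
    then have "B \<in> cv.span (\<Union>n\<in>{j..N}. set (words A p n))"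
      by (intro cv.span_base) blast
    then show "C \<in> cv.span (\<Union>n\<in>{j..N}. set (words A p n))"
      using nB(3) by (simp add: scaleR_cscale cv.span_scale)
  qed
  have s2: "(\<Union>n\<in>{j..N}. set (words A p n)) \<subseteq> cv.span (set (KS A p a j N))"
  proof
    fix B assume "B \<in> (\<Union>n\<in>{j..N}. set (words A p n))"
    then obtain n where n: "n \<in> {j..N}" "B \<in> set (words A p n)" by blast
    then have "sqrt (a n) *\<^sub>R B \<in> set (KS A p a j N)" unfolding KS_def by (auto simp del: upt_Suc)
    then have "cscale (of_real (1 / sqrt (a n))) (sqrt (a n) *\<^sub>R B) \<in> cv.span (set (KS A p a j N))"
      by (intro cv.span_scale cv.span_base)
    moreover have "cscale (of_real (1 / sqrt (a n))) (sqrt (a n) *\<^sub>R B) = B"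
      using a_pos[of n] by (simp add: scaleR_cscale)
    ultimately show "B \<in> cv.span (set (KS A p a j N))" by simp
  qed
  show ?thesis using s1 s2 cv.span_eq by blast
qed

lemma cscale_mult_left: "cscale c (X::'m::finite cmat) ** Y = cscale c (X ** Y)"
  by (simp add: vec_eq_iff cscale_def matrix_matrix_mult_def sum_distrib_left mult_ac)

lemma cscale_mult_right: "(X::'m::finite cmat) ** cscale c Y = cscale c (X ** Y)"
  by (simp add: vec_eq_iff cscale_def matrix_matrix_mult_def sum_distrib_left mult_ac)

lemma subspace_mult_right:
  assumes "cv.subspace U"
  shows "cv.subspace {x::'m::finite cmat. x ** M \<in> U}"
  using assms unfolding cv.subspace_def
  by (simp add: mm_rdistrib cscale_mult_left)

lemma subspace_mult_left:
  assumes "cv.subspace U"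
  shows "cv.subspace {x::'m::finite cmat. M ** x \<in> U}"
  using assms unfolding cv.subspace_def
  by (simp add: matrix_add_ldistrib cscale_mult_right)

lemma words_mult:
  assumes "B \<in> set (words A p n)" "C \<in> set (words A p k)"
  shows "B ** C \<in> set (words A p (n + k))"
  using assms(2)
proof (induction k arbitrary: C)
  case 0
  then show ?case using assms(1) by simp
next
  case (Suc k)
  then obtain i C' where iC: "i \<in> {1..p}" "C' \<in> set (words A p k)" "C = C' ** A i"
    using words_Suc_mem by blast
  then have "B ** C' \<in> set (words A p (n + k))" using Suc.IH by blast
  then have "(B ** C') ** A i \<in> set (words A p (Suc (n + k)))"
    using iC(1) words_Suc_mem by blast
  moreover have "B ** C = (B ** C') ** A i" using iC(3) by (simp add: matrix_mul_assoc)
  ultimately show ?case by (metis add_Suc_right)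
qed

definition TT :: "(nat \<Rightarrow> 'm::finite cmat) \<Rightarrow> nat \<Rightarrow> nat \<Rightarrow> 'm cmat set" where
  "TT A p j = cv.span (\<Union>n\<in>{j..}. set (words A p n))"

lemma TT_subalg: "is_subalg (TT A p j)"
proof -
  let ?W = "\<Union>n\<in>{j..}. set (words A p n)"
  have sub: "cv.subspace (TT A p j)" unfolding TT_def by (rule cv.subspace_span)
  have step1: "B ** y \<in> TT A p j" if B: "B \<in> ?W" and y: "y \<in> TT A p j" for B y
  proof -
    have "?W \<subseteq> {y. B ** y \<in> TT A p j}"
    proof
      fix C assume "C \<in> ?W"
      then obtain n k where "n \<ge> j" "B \<in> set (words A p n)" "k \<ge> j" "C \<in> set (words A p k)"
        using B by blast
      then have "B ** C \<in> set (words A p (n + k))" using words_mult by blast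
      then have "B ** C \<in> ?W" using \<open>n \<ge> j\<close> by (intro UN_I[of "n + k"]) auto
      then show "C \<in> {y. B ** y \<in> TT A p j}" unfolding TT_def by (simp add: cv.span_base)
    qed
    then have "cv.span ?W \<subseteq> {y. B ** y \<in> TT A p j}"
      by (rule cv.span_minimal[OF _ subspace_mult_left[OF sub]])
    then show ?thesis using y unfolding TT_def by blast
  qed
  have step2: "x ** y \<in> TT A p j" if x: "x \<in> TT A p j" and y: "y \<in> TT A p j" for x y
  proof -
    have "?W \<subseteq> {x. x ** y \<in> TT A p j}" using step1 y by blast
    then have "cv.span ?W \<subseteq> {x. x ** y \<in> TT A p j}"
      by (rule cv.span_minimal[OF _ subspace_mult_right[OF sub]])
    then show ?thesis using x unfolding TT_def by blast
  qed
  show ?thesis unfolding is_subalg_def using sub step2 by blast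
qed

lemma TT_gens: "j \<le> 1 \<Longrightarrow> A ` {1..p} \<subseteq> TT A p j"
proof
  fix x assume j: "j \<le> 1" and "x \<in> A ` {1..p}"
  then obtain i where i: "i \<in> {1..p}" "x = A i" by blast
  then have "mat 1 ** A i \<in> set (words A p 1)" using words_Suc_mem[of "mat 1 ** A i" A p 0] by auto
  then have "x \<in> (\<Union>n\<in>{j..}. set (words A p n))" using i j by (intro UN_I[of 1]) auto
  then show "x \<in> TT A p j" unfolding TT_def by (rule cv.span_base)
qed

lemma TT_one: "mat 1 \<in> TT A p 0"
  unfolding TT_def by (rule cv.span_base, rule UN_I[of 0]) auto

lemma TT_min:
  assumes j: "j \<le> 1" and B: "is_subalg B" "A ` {1..p} \<subseteq> B" "j = 0 \<longrightarrow> mat 1 \<in> B"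
  shows "TT A p j \<subseteq> B"
proof -
  have w: "set (words A p (Suc n)) \<subseteq> B" for n
  proof (induction n)
    case 0
    then show ?case using B(2) by auto
  next
    case (Suc n)
    show ?case
    proof
      fix C assume "C \<in> set (words A p (Suc (Suc n)))"
      then obtain i C' where iC: "i \<in> {1..p}" "C' \<in> set (words A p (Suc n))" "C = C' ** A i"
        using words_Suc_mem by blast
      have "C' \<in> B" using iC(2) Suc by blast
      moreover have "A i \<in> B" using iC(1) B(2) by blast
      ultimately show "C \<in> B" using iC(3) B(1) unfolding is_subalg_def by blast
    qed
  qed
  have "(\<Union>n\<in>{j..}. set (words A p n)) \<subseteq> B"
  proof (intro UN_least)
    fix n assume n: "n \<in> {j..}"
    show "set (words A p n) \<subseteq> B"
    proof (cases n)
      case 0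
      then show ?thesis using n j B(3) by auto
    next
      case (Suc k)
      then show ?thesis using w by blast
    qed
  qed
  moreover have "cv.subspace B" using B(1) unfolding is_subalg_def by blast
  ultimately show ?thesis unfolding TT_def by (rule cv.span_minimal)
qed

lemma gen_alg_TT:
  assumes "j \<le> 1"
  shows "gen_alg (j = 0) (A ` {1..p}) = TT A p j"
  unfolding gen_alg_def
proof (rule antisym)
  show "\<Inter> {B. is_subalg B \<and> A ` {1..p} \<subseteq> B \<and> (j = 0 \<longrightarrow> mat 1 \<in> B)} \<subseteq> TT A p j"
  proof (rule Inter_lower, intro CollectI conjI impI)
    show "is_subalg (TT A p j)" by (rule TT_subalg)
    show "A ` {1..p} \<subseteq> TT A p j" by (rule TT_gens[OF assms])
    show "mat 1 \<in> TT A p j" if "j = 0" using that TT_one by simp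
  qed
  show "TT A p j \<subseteq> \<Inter> {B. is_subalg B \<and> A ` {1..p} \<subseteq> B \<and> (j = 0 \<longrightarrow> mat 1 \<in> B)}"
    using TT_min[OF assms] by (intro Inter_greatest) auto
qed

definition BB :: "'m::finite cmat set" where
  "BB = (\<lambda>(a, b). EE a b) ` UNIV"

lemma BB_finite: "finite (BB :: 'm::finite cmat set)"
  unfolding BB_def by simp

lemma BB_card: "card (BB :: 'm::finite cmat set) \<le> CARD('m)^2"
proof -
  have "card (BB :: 'm::finite cmat set) \<le> card (UNIV :: ('m \<times> 'm) set)"
    unfolding BB_def by (rule card_image_le) simp
  also have "\<dots> = CARD('m)^2" by (simp add: power2_eq_square)
  finally show ?thesis .
qed

lemma BB_span: "cv.span (BB :: 'm::finite cmat set) = UNIV"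
proof -
  have "X \<in> cv.span BB" for X :: "'m cmat"
  proof -
    have "(\<Sum>a\<in>UNIV. \<Sum>b\<in>UNIV. cscale (X$a$b) (EE a b)) \<in> cv.span BB"
      by (intro cv.span_sum cv.span_scale cv.span_base) (auto simp: BB_def)
    then show ?thesis using expand_mat[of X] by simp
  qed
  then show ?thesis by auto
qed

lemma EE_entry_BB:
  assumes "v \<in> BB"
  shows "v $ a $ b = (if v = EE a b then 1 else 0)"
proof -
  obtain c d where v: "v = EE c d" using assms unfolding BB_def by auto
  show ?thesis
  proof (cases "c = a \<and> d = b")
    case True then show ?thesis using v by (simp add: EE_comp)
  next
    case False
    then have "EE c d \<noteq> EE a b"
      by (metis EE_comp zero_neq_one)
    then show ?thesis using v False by (auto simp: EE_comp)
  qed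
qed

lemma BB_indep: "cv.independent (BB :: 'm::finite cmat set)"
  unfolding cv.independent_explicit_module
proof (intro allI impI)
  fix t u v
  assume t: "finite t" "t \<subseteq> (BB :: 'm cmat set)" "(\<Sum>v\<in>t. cscale (u v) v) = 0" "v \<in> t"
  obtain a b where v: "v = EE a b" using t unfolding BB_def by auto
  have "0 = (\<Sum>w\<in>t. cscale (u w) w) $ a $ b" using t(3) by simp
  also have "\<dots> = (\<Sum>w\<in>t. u w * (if w = EE a b then 1 else 0))"
    using t(2) by (auto intro!: sum.cong simp: EE_entry_BB)
  also have "\<dots> = u v" using t(1,4) v by (simp add: sum.delta')
  finally show "u v = 0" by simp
qed

interpretation cvf: finite_dimensional_vector_space cscale "BB :: 'm::finite cmat set"
  by unfold_locales (simp_all add: BB_finite BB_indep BB_span)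

lemma dim_le_sq: "cv.dim (S :: 'm::finite cmat set) \<le> CARD('m)^2"
proof -
  have "cv.dim S \<le> card (BB :: 'm cmat set)" using cvf.dim_subset_UNIV[of S] unfolding cvf.dimension_def .
  also have "\<dots> \<le> CARD('m)^2" by (rule BB_card)
  finally show ?thesis .
qed

definition VV :: "(nat \<Rightarrow> 'm::finite cmat) \<Rightarrow> nat \<Rightarrow> nat \<Rightarrow> nat \<Rightarrow> 'm cmat set" where
  "VV A p j k = cv.span (\<Union>n\<in>{j..k}. set (words A p n))"

lemma VV_mono: "k \<le> k' \<Longrightarrow> VV A p j k \<subseteq> VV A p j k'"
  unfolding VV_def by (intro cv.span_mono UN_mono) auto

lemma span_mult_right:
  assumes "x \<in> cv.span S"
  shows "x ** M \<in> cv.span ((\<lambda>X. X ** M) ` (S :: 'm::finite cmat set))"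
proof -
  have "cv.span S \<subseteq> {x. x ** M \<in> cv.span ((\<lambda>X. X ** M) ` S)}"
    by (rule cv.span_minimal[OF _ subspace_mult_right[OF cv.subspace_span]])
      (auto intro: cv.span_base)
  then show ?thesis using assms by blast
qed

lemma VV_step:
  assumes jk: "j \<le> k" and eq: "VV A p j (Suc k) = VV A p j k"
  shows "VV A p j (Suc (Suc k)) = VV A p j (Suc k)"
proof (rule antisym)
  show "VV A p j (Suc k) \<subseteq> VV A p j (Suc (Suc k))" by (rule VV_mono) simp
  have gen: "(\<Union>n\<in>{j..Suc (Suc k)}. set (words A p n)) \<subseteq> VV A p j (Suc k)"
  proof (intro UN_least subsetI)
    fix n C assume n: "n \<in> {j..Suc (Suc k)}" and C: "C \<in> set (words A p n)"
    show "C \<in> VV A p j (Suc k)"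
    proof (cases "n \<le> Suc k")
      case True
      then show ?thesis unfolding VV_def using n C by (intro cv.span_base UN_I[of n]) auto
    next
      case False
      then have nn: "n = Suc (Suc k)" using n by auto
      then obtain i C' where iC: "i \<in> {1..p}" "C' \<in> set (words A p (Suc k))" "C = C' ** A i"
        using C words_Suc_mem by blast
      have "C' \<in> VV A p j (Suc k)" unfolding VV_def using iC(2) jk by (intro cv.span_base UN_I[of "Suc k"]) auto
      then have "C' \<in> cv.span (\<Union>n\<in>{j..k}. set (words A p n))" using eq unfolding VV_def by simp
      then have "C \<in> cv.span ((\<lambda>X. X ** A i) ` (\<Union>n\<in>{j..k}. set (words A p n)))"
        using span_mult_right iC(3) by blast
      moreover have "(\<lambda>X. X ** A i) ` (\<Union>n\<in>{j..k}. set (words A p n)) \<subseteq> (\<Union>n\<in>{j..Suc k}. set (words A p n))"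
      proof
        fix Y assume "Y \<in> (\<lambda>X. X ** A i) ` (\<Union>n\<in>{j..k}. set (words A p n))"
        then obtain m X where m: "m \<in> {j..k}" "X \<in> set (words A p m)" "Y = X ** A i" by blast
        then have "Y \<in> set (words A p (Suc m))" using iC(1) words_Suc_mem by blast
        then show "Y \<in> (\<Union>n\<in>{j..Suc k}. set (words A p n))" using m(1) by (intro UN_I[of "Suc m"]) auto
      qed
      ultimately show ?thesis unfolding VV_def using cv.span_mono by blast
    qed
  qed
  show "VV A p j (Suc (Suc k)) \<subseteq> VV A p j (Suc k)"
    using cv.span_minimal[OF gen] unfolding VV_def[of A p j "Suc (Suc k)"]
    by (simp add: VV_def cv.subspace_span)
qed

lemma VV_stable1:
  assumes jk: "j \<le> k" and eq: "VV A p j (Suc k) = VV A p j k"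
  shows "VV A p j (Suc (k + d)) = VV A p j (k + d)"
proof (induction d)
  case 0 then show ?case using eq by simp
next
  case (Suc d)
  then show ?case using VV_step[of j "k + d" A p] jk by simp
qed

lemma VV_stable:
  assumes jk: "j \<le> k" and eq: "VV A p j (Suc k) = VV A p j k"
  shows "VV A p j (k + d) = VV A p j k"
proof (induction d)
  case 0 then show ?case by simp
next
  case (Suc d)
  then show ?case using VV_stable1[OF jk eq, of d] by simp
qed

lemma TT_VV:
  assumes jk: "j \<le> k" and eq: "VV A p j (Suc k) = VV A p j k"
  shows "TT A p j = VV A p j k"
proof (rule antisym)
  show "VV A p j k \<subseteq> TT A p j" unfolding VV_def TT_def by (rule cv.span_mono) auto
  have "(\<Union>n\<in>{j..}. set (words A p n)) \<subseteq> VV A p j k"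
  proof (intro UN_least subsetI)
    fix n C assume n: "n \<in> {j..}" and C: "C \<in> set (words A p n)"
    have "C \<in> VV A p j (max n k)" unfolding VV_def using n C by (intro cv.span_base UN_I[of n]) auto
    moreover have "VV A p j (max n k) = VV A p j k"
      using VV_stable[OF jk eq, of "max n k - k"] by simp
    ultimately show "C \<in> VV A p j k" by simp
  qed
  then show "TT A p j \<subseteq> VV A p j k"
    unfolding TT_def by (rule cv.span_minimal) (simp add: VV_def cv.subspace_span)
qed

lemma VV_dim_strict:
  assumes "VV A p j k \<noteq> VV A p j (Suc k)"
  shows "cv.dim (VV A p j k) < cv.dim (VV A p j (Suc k))"
proof -
  have "VV A p j k \<subset> VV A p j (Suc k)" using VV_mono[of k "Suc k" A p j] assms by auto
  then have "cv.span (VV A p j k) \<subset> cv.span (VV A p j (Suc k))"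
    by (simp add: VV_def cv.span_span)
  then show ?thesis by (rule cvf.dim_psubset)
qed

lemma VV_count:
  assumes "\<forall>k\<in>{j..<j+n}. VV A p j k \<noteq> VV A p j (Suc k)"
  shows "cv.dim (VV A p j j) + n \<le> cv.dim (VV A p j (j + n))"
  using assms
proof (induction n)
  case 0 then show ?case by simp
next
  case (Suc n)
  then have "cv.dim (VV A p j j) + n \<le> cv.dim (VV A p j (j + n))" by auto
  moreover have "cv.dim (VV A p j (j + n)) < cv.dim (VV A p j (Suc (j + n)))"
    using Suc.prems by (intro VV_dim_strict) auto
  ultimately show ?case by simp
qed

lemma VV_exists:
  assumes j: "j \<le> 1"
  shows "\<exists>k. j \<le> k \<and> k \<le> CARD('m::finite)^2 \<and> VV (A :: nat \<Rightarrow> 'm cmat) p j (Suc k) = VV A p j k"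
proof (cases "cv.dim (VV A p j j) = 0")
  case True
  then have z: "VV A p j j \<subseteq> {0}" by simp
  have wz: "set (words A p j) \<subseteq> {0}"
    using z unfolding VV_def using cv.span_superset by fastforce
  have "VV A p j (Suc j) \<subseteq> VV A p j j"
    unfolding VV_def[of A p j "Suc j"]
  proof (rule cv.span_minimal)
    show "cv.subspace (VV A p j j)" unfolding VV_def by (rule cv.subspace_span)
    show "(\<Union>n\<in>{j..Suc j}. set (words A p n)) \<subseteq> VV A p j j"
    proof (intro UN_least subsetI)
      fix n C assume n: "n \<in> {j..Suc j}" and C: "C \<in> set (words A p n)"
      show "C \<in> VV A p j j"
      proof (cases "n = j")
        case True then show ?thesis using C unfolding VV_def by (intro cv.span_base UN_I[of n]) auto
      next
        case False
        then have "n = Suc j" using n by auto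
        then obtain i C' where iC: "C' \<in> set (words A p j)" "C = C' ** A i"
          using C words_Suc_mem by blast
        then have "C = 0" using wz by auto
        then show ?thesis unfolding VV_def by (simp add: cv.span_zero)
      qed
    qed
  qed
  moreover have "VV A p j j \<subseteq> VV A p j (Suc j)" by (rule VV_mono) simp
  moreover have "j \<le> CARD('m)^2"
    using j by (metis One_nat_def le_trans finite_UNIV_card_ge_0 finite less_eq_Suc_le one_le_power)
  ultimately show ?thesis by blast
next
  case False
  show ?thesis
  proof (rule ccontr)
    assume H: "\<not> ?thesis"
    have "\<forall>k\<in>{j..<j+CARD('m)^2}. VV A p j k \<noteq> VV A p j (Suc k)"
    proof (intro ballI notI)
      fix k assume k: "k \<in> {j..<j+CARD('m)^2}" and e: "VV A p j k = VV A p j (Suc k)"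
      then have "j \<le> k" "k \<le> CARD('m)^2" using j by auto
      then have "\<exists>k. j \<le> k \<and> k \<le> CARD('m)^2 \<and> VV A p j (Suc k) = VV A p j k"
        using e by auto
      then show False using H by blast
    qed
    then have "cv.dim (VV A p j j) + CARD('m)^2 \<le> cv.dim (VV A p j (j + CARD('m)^2))"
      by (rule VV_count)
    moreover have "cv.dim (VV A p j (j + CARD('m)^2)) \<le> CARD('m)^2" by (rule dim_le_sq)
    ultimately show False using False by linarith
  qed
qed

theorem theorem5p5:
  fixes A :: "nat \<Rightarrow> 'm::finite cmat" and p :: nat and a :: "nat \<Rightarrow> real"
    and \<tau> :: "'m cmat \<Rightarrow> 'm cmat"
  assumes tau_def: "\<And>X. \<tau> X = (\<Sum>i=1..p. cadj (A i) ** X ** A i)"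
    and a_pos: "\<And>n. a n > 0"
    and conv: "summable (\<lambda>n. a n *\<^sub>R Blinfun (\<tau> ^^ n))"
  shows "\<forall>j\<in>{0::nat, 1}. \<exists>N. N \<le> CARD('m)^2 \<and>
           coeff_space (\<lambda>X. \<Sum>n=j..N. a n *\<^sub>R (\<tau> ^^ n) X) = gen_alg (j = 0) (A ` {1..p}) \<and>
           choi_rank (\<lambda>X. \<Sum>n=j..N. a n *\<^sub>R (\<tau> ^^ n) X)
             = vector_space.dim cscale (gen_alg (j = 0) (A ` {1..p}))"
proof
  fix j :: nat assume "j \<in> {0, 1}"
  then have j: "j \<le> 1" by auto
  obtain k where k: "j \<le> k" "k \<le> CARD('m)^2" "VV A p j (Suc k) = VV A p j k"
    using VV_exists[OF j, of A p] by blast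
  have cs: "coeff_space (\<lambda>X. \<Sum>n=j..k. a n *\<^sub>R (\<tau> ^^ n) X) = gen_alg (j = 0) (A ` {1..p})"
  proof -
    have "coeff_space (\<lambda>X. \<Sum>n=j..k. a n *\<^sub>R (\<tau> ^^ n) X) = cv.span (set (KS A p a j k))"
      by (rule coeff_space_eq[OF KS_kraus[OF tau_def a_pos]])
    also have "\<dots> = VV A p j k" unfolding VV_def by (rule KS_span[OF a_pos])
    also have "\<dots> = TT A p j" using TT_VV[OF k(1) k(3)] by simp
    also have "\<dots> = gen_alg (j = 0) (A ` {1..p})" by (rule gen_alg_TT[OF j, symmetric])
    finally show ?thesis .
  qed
  show "\<exists>N. N \<le> CARD('m)^2 \<and>
           coeff_space (\<lambda>X. \<Sum>n=j..N. a n *\<^sub>R (\<tau> ^^ n) X) = gen_alg (j = 0) (A ` {1..p}) \<and>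
           choi_rank (\<lambda>X. \<Sum>n=j..N. a n *\<^sub>R (\<tau> ^^ n) X)
             = vector_space.dim cscale (gen_alg (j = 0) (A ` {1..p}))"
  proof (intro exI conjI)
    show "k \<le> CARD('m)^2" by (rule k(2))
    show "coeff_space (\<lambda>X. \<Sum>n=j..k. a n *\<^sub>R (\<tau> ^^ n) X) = gen_alg (j = 0) (A ` {1..p})" by (rule cs)
    show "choi_rank (\<lambda>X. \<Sum>n=j..k. a n *\<^sub>R (\<tau> ^^ n) X) = vector_space.dim cscale (gen_alg (j = 0) (A ` {1..p}))"
      unfolding choi_rank_def cs ..
  qed
qed

end
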